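(* Let $E$ be a uniformly random simple $d$-regular graph on $\{1,\dots,N\}$ (identified with its edge set), and, conditionally on $E$, let $(\mathbf S,\mathbf s)=((S_1,\dots,S_d),(s_1,\dots,s_d))$ be uniform over $\mathcal S_1(E)\times\cdots\times\mathcal S_d(E)\times\{1,\dots,8\}^d$. Then $T_{\mathbf S,\mathbf s}(E)$ is a uniformly random simple $d$-regular graph.
   Context: For a set $S$ of edges, $[S]=\bigcup_{e\in S}e$ is its vertex set; for $B\subset\{1,\dots,N\}$, $E|_B=\{e\in E: e\subset B\}$. For each simple $d$-regular $E$, fix an enumeration $e_1(E),\dots,e_d(E)$ of the edges of $E$ incident to vertex $1$, and let $\mathcal S_\mu(E)$ be the set of subsets $S\subset E$ with $|S|=3$, $e_\mu(E)\in S$, and no edge of $S\setminus\{e_\mu(E)\}$ incident to $1$. For $S\subset E$ with $|S|=3$ let $I(E,S)=\mathbf 1\{|[S]|=6,\ E|_{[S]}=S\}$. For a 3-edge set $S$ with $|[S]|=6$, there are eight perfect matchings $S'$ of $[S]$ with $S\cap S'=\emptyset$; fix an enumeration $S'_1,\dots,S'_8$ of them and set $T_{S,s}(E)=(E\setminus S)\cup S'_s$. Given $(\mathbf S,\mathbf s)$ with $S_\mu\in\mathcal S_\mu(E)$, define $I_\mu=I(E,S_\mu)$, $J_\mu=\mathbf 1\{[S_\mu]\cap[S_\nu]=\{1\}\text{ for all }\nu\neq\mu\}$, $W=\{\mu\in\{1,\dots,d\}: I_\mu J_\mu=1\}$, and $T_{\mathbf S,\mathbf s}(E)=(T_{S_{\mu_1},s_{\mu_1}}\circ\cdots\circ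 T_{S_{\mu_k},s_{\mu_k}})(E)$ where $\mu_1,\dots,\mu_k$ enumerates $W$ (this does not depend on the order; equivalently, each $S_\mu$ with $\mu\in W$ is replaced by the corresponding matching $S'_{s_\mu}$ of $[S_\mu]$). *)

theory Defs
  imports "HOL-Probability.Probability"
begin

definition simple_regular :: "nat \<Rightarrow> nat \<Rightarrow> nat set set \<Rightarrow> bool" where
  "simple_regular N d E \<longleftrightarrow>
     E \<subseteq> {e. e \<subseteq> {1..N} \<and> card e = 2} \<and> (\<forall>v\<in>{1..N}. card {e\<in>E. v \<in> e} = d)"

definition RG :: "nat \<Rightarrow> nat \<Rightarrow> nat set set set" where
  "RG N d = {E. simple_regular N d E}"

definition restr :: "nat set set \<Rightarrow> nat set \<Rightarrow> nat set set" where
  "restr E B = {e\<in>E. e \<subseteq> B}"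

text \<open>S_mu(E), with enum E mu playing the role of e_mu(E).\<close>
definition Ssets :: "(nat set set \<Rightarrow> nat \<Rightarrow> nat set) \<Rightarrow> nat set set \<Rightarrow> nat \<Rightarrow> nat set set set" where
  "Ssets enum E \<mu> = {S. S \<subseteq> E \<and> card S = 3 \<and> enum E \<mu> \<in> S \<and> (\<forall>e\<in>S - {enum E \<mu>}. (1::nat) \<notin> e)}"

definition Iind :: "nat set set \<Rightarrow> nat set set \<Rightarrow> bool" where
  "Iind E S \<longleftrightarrow> card (\<Union>S) = 6 \<and> restr E (\<Union>S) = S"

definition Jind :: "nat \<Rightarrow> (nat \<Rightarrow> nat set set) \<Rightarrow> nat \<Rightarrow> bool" where
  "Jind d Sf \<mu> \<longleftrightarrow> (\<forall>\<nu>\<in>{1..d}. \<nu> \<noteq> \<mu> \<longrightarrow> \<Union>(Sf \<mu>) \<inter> \<Union>(Sf \<nu>) = {1})"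

definition perfect_matching :: "nat set \<Rightarrow> nat set set \<Rightarrow> bool" where
  "perfect_matching V M \<longleftrightarrow> (\<forall>e\<in>M. card e = 2 \<and> e \<subseteq> V) \<and> (\<forall>v\<in>V. \<exists>!e. e \<in> M \<and> v \<in> e)"

text \<open>Sample space for (S, s): omega mu = (S_mu, s_mu).\<close>
definition Omega :: "(nat set set \<Rightarrow> nat \<Rightarrow> nat set) \<Rightarrow> nat \<Rightarrow> nat set set
                     \<Rightarrow> (nat \<Rightarrow> nat set set \<times> nat) set" where
  "Omega enum d E = PiE {1..d} (\<lambda>\<mu>. Ssets enum E \<mu> \<times> {1..8})"

definition Wset :: "nat \<Rightarrow> nat set set \<Rightarrow> (nat \<Rightarrow> nat set set \<times> nat) \<Rightarrow> nat set" where
  "Wset d E \<omega> = {\<mu>\<in>{1..d}. Iind E (fst (\<omega> \<mu>)) \<and> Jind d (\<lambda>\<nu>. fst (\<omega> \<nu>)) \<mu>}"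

definition switch :: "nat \<Rightarrow> (nat set set \<Rightarrow> nat \<Rightarrow> nat set set) \<Rightarrow> nat set set
                      \<Rightarrow> (nat \<Rightarrow> nat set set \<times> nat) \<Rightarrow> nat set set" where
  "switch d mt E \<omega> =
     (E - (\<Union>\<mu>\<in>Wset d E \<omega>. fst (\<omega> \<mu>))) \<union> (\<Union>\<mu>\<in>Wset d E \<omega>. mt (fst (\<omega> \<mu>)) (snd (\<omega> \<mu>)))"

end

theory Submission
  imports Defs
begin

lemma three_disj:
  assumes "card S = 3" "\<forall>e\<in>S. card e = 2" "card (\<Union>S) = 6"
    "a \<in> S" "b \<in> S" "a \<noteq> b"
  shows "a \<inter> b = {}"
proof (rule ccontr)
  assume ne: "a \<inter> b \<noteq> {}"
  obtain c where S: "S = {a,b,c}" using assms(1,4,5,6) unfolding card_3_iff by blast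
  have fa: "finite a" "finite b" "finite c" using assms(2) S
    by (metis card.infinite insertCI zero_neq_numeral)+
  have "card (a \<union> b) + card (a \<inter> b) = card a + card b" using fa card_Un_Int by metis
  moreover have "card (a \<inter> b) \<ge> 1" using ne fa by (simp add: Suc_leI card_gt_0_iff)
  ultimately have "card (a \<union> b) \<le> 3" using assms(2) S by auto
  moreover have "\<Union>S = (a \<union> b) \<union> c" using S by auto
  moreover have "card ((a \<union> b) \<union> c) \<le> card (a \<union> b) + card c" by (rule card_Un_le)
  ultimately have "card (\<Union>S) \<le> 5" using assms(2) S by auto
  thus False using assms(3) by simp
qed

lemma pm_of_three:
  assumes "card S = 3" "\<forall>e\<in>S. card e = 2" "card (\<Union>S) = 6"
  shows "perfect_matching (\<Union>S) S"
proof -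
  have A: "\<forall>e\<in>S. card e = 2 \<and> e \<subseteq> \<Union>S" using assms(2) by blast
  have B: "\<forall>v\<in>\<Union>S. \<exists>!e. e \<in> S \<and> v \<in> e"
  proof
    fix v assume "v \<in> \<Union>S"
    then obtain e where e: "e \<in> S" "v \<in> e" by blast
    have u: "\<And>f. f \<in> S \<and> v \<in> f \<Longrightarrow> f = e"
    proof (rule ccontr)
      fix f assume f: "f \<in> S \<and> v \<in> f" "f \<noteq> e"
      have "f \<inter> e = {}" by (rule three_disj[OF assms]) (use f e in auto)
      thus False using f e by blast
    qed
    have "e \<in> S \<and> v \<in> e" using e by blast
    thus "\<exists>!e. e \<in> S \<and> v \<in> e" using u by (rule ex1I)
  qed
  show ?thesis unfolding perfect_matching_def using A B by blast
qed

lemma pm_unique: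
  assumes "perfect_matching V M" "e \<in> M" "f \<in> M" "v \<in> e" "v \<in> f"
  shows "e = f"
proof -
  have "v \<in> V" using assms(1,2,4) unfolding perfect_matching_def by blast
  hence "\<exists>!e. e \<in> M \<and> v \<in> e" using assms(1) unfolding perfect_matching_def by blast
  thus ?thesis using assms(2-5) by blast
qed

lemma pm_Union:
  assumes "perfect_matching V M" shows "\<Union>M = V"
proof
  show "\<Union>M \<subseteq> V" using assms unfolding perfect_matching_def by blast
  show "V \<subseteq> \<Union>M"
  proof
    fix v assume "v \<in> V"
    hence "\<exists>!e. e \<in> M \<and> v \<in> e" using assms unfolding perfect_matching_def by blast
    thus "v \<in> \<Union>M" by blast
  qed
qed

lemma pm_card:
  assumes "perfect_matching V M" "card V = 6"
  shows "card M = 3"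
proof -
  have fV: "finite V" using assms(2) card.infinite by fastforce
  have sub: "\<And>e. e \<in> M \<Longrightarrow> e \<subseteq> V" using assms(1) unfolding perfect_matching_def by blast
  have fin: "\<And>e. e \<in> M \<Longrightarrow> finite e" using sub fV by (rule finite_subset)
  have disj: "disjoint M"
    unfolding disjoint_def
  proof (intro ballI impI)
    fix a b assume "a \<in> M" "b \<in> M" "a \<noteq> b"
    thus "a \<inter> b = {}" using pm_unique[OF assms(1), of a b] by blast
  qed
  have "card (\<Union>M) = sum card M"
    by (rule card_Union_disjoint[OF disj fin])
  also have "\<dots> = sum (\<lambda>_. 2) M"
    using assms(1) unfolding perfect_matching_def by (intro sum.cong) auto
  finally have "card V = 2 * card M" using pm_Union[OF assms(1)] by simp
  thus ?thesis using assms(2) by simp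
qed

definition e1 :: "nat set set \<Rightarrow> nat set" where
  "e1 X = (THE e. e \<in> X \<and> (1::nat) \<in> e)"

lemma e1_eq:
  assumes "e \<in> X" "1 \<in> e" "\<And>f. f \<in> X \<Longrightarrow> 1 \<in> f \<Longrightarrow> f = e"
  shows "e1 X = e"
  unfolding e1_def
proof (rule the_equality)
  show "e \<in> X \<and> 1 \<in> e" using assms by blast
  fix f assume "f \<in> X \<and> 1 \<in> f" thus "f = e" using assms(3) by blast
qed

definition SpF :: "nat \<Rightarrow> (nat set set \<Rightarrow> nat \<Rightarrow> nat set set) \<Rightarrow> nat set set \<Rightarrow> (nat \<Rightarrow> nat set set \<times> nat) \<Rightarrow> nat \<Rightarrow> nat set set" where
  "SpF d mt E \<omega> \<mu> = (if \<mu> \<in> Wset d E \<omega> then mt (fst (\<omega> \<mu>)) (snd (\<omega> \<mu>)) else fst (\<omega> \<mu>))"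

definition tpF :: "nat \<Rightarrow> (nat set set \<Rightarrow> nat \<Rightarrow> nat set set) \<Rightarrow> nat set set \<Rightarrow> (nat \<Rightarrow> nat set set \<times> nat) \<Rightarrow> nat \<Rightarrow> nat" where
  "tpF d mt E \<omega> \<mu> = (if \<mu> \<in> Wset d E \<omega> then inv_into {1..8} (mt (mt (fst (\<omega> \<mu>)) (snd (\<omega> \<mu>)))) (fst (\<omega> \<mu>)) else snd (\<omega> \<mu>))"

definition rhoF where
  "rhoF d mt enum E \<omega> \<nu> = inv_into {1..d} (\<lambda>\<kappa>. e1 (SpF d mt E \<omega> \<kappa>)) (enum (switch d mt E \<omega>) \<nu>)"

definition omF where
  "omF d mt enum E \<omega> = (\<lambda>\<nu>. if \<nu> \<in> {1..d} then (SpF d mt E \<omega> (rhoF d mt enum E \<omega> \<nu>), tpF d mt E \<omega> (rhoF d mt enum E \<omega> \<nu>)) else undefined)"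

locale sw =
  fixes N d :: nat
    and enum :: "nat set set \<Rightarrow> nat \<Rightarrow> nat set"
    and mt :: "nat set set \<Rightarrow> nat \<Rightarrow> nat set set"
  assumes enum_bij: "\<forall>E\<in>RG N d. bij_betw (enum E) {1..d} {e\<in>E. (1::nat) \<in> e}"
    and mt_bij: "\<forall>S::nat set set. card S = 3 \<and> (\<forall>e\<in>S. card e = 2) \<and> card (\<Union>S) = 6 \<longrightarrow>
                   bij_betw (mt S) {1..8} {M. perfect_matching (\<Union>S) M \<and> S \<inter> M = {}}"

locale sw1 = sw +
  fixes E :: "nat set set" and \<omega> :: "nat \<Rightarrow> nat set set \<times> nat"
  assumes E_RG: "E \<in> RG N d" and om: "\<omega> \<in> Omega enum d E"
begin

abbreviation S where "S \<mu> \<equiv> fst (\<omega> \<mu>)"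
abbreviation s where "s \<mu> \<equiv> snd (\<omega> \<mu>)"
abbreviation B where "B \<mu> \<equiv> \<Union>(S \<mu>)"
abbreviation W where "W \<equiv> Wset d E \<omega>"
abbreviation M where "M \<mu> \<equiv> mt (S \<mu>) (s \<mu>)"
abbreviation Sp where "Sp \<equiv> SpF d mt E \<omega>"
abbreviation tp where "tp \<equiv> tpF d mt E \<omega>"
abbreviation rho where "rho \<equiv> rhoF d mt enum E \<omega>"
abbreviation om' where "om' \<equiv> omF d mt enum E \<omega>"
lemma Sp_def: "Sp \<mu> = (if \<mu> \<in> W then M \<mu> else S \<mu>)" by (simp add: SpF_def)
lemma tp_def: "tp \<mu> = (if \<mu> \<in> W then inv_into {1..8} (mt (M \<mu>)) (S \<mu>) else s \<mu>)" by (simp add: tpF_def)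
abbreviation E' where "E' \<equiv> switch d mt E \<omega>"

lemma srE: "simple_regular N d E" using E_RG unfolding RG_def by simp

lemma edgesE: "e \<in> E \<Longrightarrow> card e = 2 \<and> e \<subseteq> {1..N}"
proof -
  assume "e \<in> E"
  moreover have "E \<subseteq> {e. e \<subseteq> {1..N} \<and> card e = 2}" using srE unfolding simple_regular_def by blast
  ultimately show ?thesis by blast
qed

lemma finE: "finite E"
proof -
  have "E \<subseteq> Pow {1..N}" using edgesE by auto
  moreover have "finite (Pow {1..N})" by simp
  ultimately show ?thesis by (rule finite_subset)
qed

lemma degE: "v \<in> {1..N} \<Longrightarrow> card {e\<in>E. v \<in> e} = d"
  using srE unfolding simple_regular_def by blast

lemma enumE_bij: "bij_betw (enum E) {1..d} {e\<in>E. (1::nat) \<in> e}"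
  using enum_bij E_RG by blast

lemma enum_props: "\<mu> \<in> {1..d} \<Longrightarrow> enum E \<mu> \<in> E \<and> 1 \<in> enum E \<mu>"
  using bij_betwE[OF enumE_bij] by blast

lemma enum_inj: "\<mu> \<in> {1..d} \<Longrightarrow> \<nu> \<in> {1..d} \<Longrightarrow> enum E \<mu> = enum E \<nu> \<Longrightarrow> \<mu> = \<nu>"
  using inj_onD[OF bij_betw_imp_inj_on[OF enumE_bij]] by blast

lemma enum_onto: "e \<in> E \<Longrightarrow> 1 \<in> e \<Longrightarrow> \<exists>\<mu>\<in>{1..d}. e = enum E \<mu>"
proof -
  assume "e \<in> E" "1 \<in> e"
  hence "e \<in> enum E ` {1..d}" using bij_betw_imp_surj_on[OF enumE_bij] by blast
  thus ?thesis by blast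
qed

lemma S_props: "\<mu> \<in> {1..d} \<Longrightarrow> S \<mu> \<subseteq> E \<and> card (S \<mu>) = 3 \<and> enum E \<mu> \<in> S \<mu> \<and>
    (\<forall>e\<in>S \<mu> - {enum E \<mu>}. 1 \<notin> e) \<and> s \<mu> \<in> {1..8}"
  using om unfolding Omega_def Ssets_def PiE_def Pi_def by (auto simp: mem_Times_iff)

lemma om_undef: "\<mu> \<notin> {1..d} \<Longrightarrow> \<omega> \<mu> = undefined"
  using om unfolding Omega_def PiE_def extensional_def by auto

lemma S_edges: "\<mu> \<in> {1..d} \<Longrightarrow> e \<in> S \<mu> \<Longrightarrow> card e = 2 \<and> e \<subseteq> {1..N}"
  using S_props edgesE by blast

lemma e1_S: "\<mu> \<in> {1..d} \<Longrightarrow> e1 (S \<mu>) = enum E \<mu>"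
  using S_props enum_props by (intro e1_eq) auto

lemma one_B: "\<mu> \<in> {1..d} \<Longrightarrow> 1 \<in> B \<mu>"
  using S_props enum_props by blast

lemma W_sub: "W \<subseteq> {1..d}"
  unfolding Wset_def by auto

lemma W_I: "\<mu> \<in> W \<Longrightarrow> card (B \<mu>) = 6 \<and> restr E (B \<mu>) = S \<mu>"
  unfolding Wset_def Iind_def by auto

lemma W_J: "\<mu> \<in> W \<Longrightarrow> \<nu> \<in> {1..d} \<Longrightarrow> \<nu> \<noteq> \<mu> \<Longrightarrow> B \<mu> \<inter> B \<nu> = {1}"
  unfolding Wset_def Jind_def by auto

lemma W_mt: "\<mu> \<in> W \<Longrightarrow> bij_betw (mt (S \<mu>)) {1..8} {M. perfect_matching (B \<mu>) M \<and> S \<mu> \<inter> M = {}}"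
proof -
  assume w: "\<mu> \<in> W"
  have m: "\<mu> \<in> {1..d}" using w W_sub by blast
  have "card (S \<mu>) = 3 \<and> (\<forall>e\<in>S \<mu>. card e = 2) \<and> card (B \<mu>) = 6"
    using S_props[OF m] S_edges[OF m] W_I[OF w] by blast
  thus ?thesis using mt_bij by blast
qed

lemma M_props: "\<mu> \<in> W \<Longrightarrow> perfect_matching (B \<mu>) (M \<mu>) \<and> S \<mu> \<inter> M \<mu> = {} \<and>
   \<Union>(M \<mu>) = B \<mu> \<and> card (M \<mu>) = 3"
proof -
  assume w: "\<mu> \<in> W"
  hence "M \<mu> \<in> {M. perfect_matching (B \<mu>) M \<and> S \<mu> \<inter> M = {}}"
    using W_mt[OF w] S_props W_sub unfolding bij_betw_def by blast
  thus ?thesis using pm_Union pm_card W_I[OF w] by auto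
qed

lemma M_edges: "\<mu> \<in> W \<Longrightarrow> f \<in> M \<mu> \<Longrightarrow> card f = 2 \<and> f \<subseteq> B \<mu>"
  using M_props unfolding perfect_matching_def by blast

lemma M_notin_E: "\<mu> \<in> W \<Longrightarrow> f \<in> M \<mu> \<Longrightarrow> f \<notin> E"
proof
  assume w: "\<mu> \<in> W" and f: "f \<in> M \<mu>" "f \<in> E"
  hence "f \<in> restr E (B \<mu>)" using M_edges unfolding restr_def by auto
  hence "f \<in> S \<mu>" using W_I[OF w] by simp
  thus False using M_props[OF w] f by auto
qed

lemma edge_two: "card f = 2 \<Longrightarrow> f \<subseteq> B \<kappa> \<Longrightarrow> f \<subseteq> B \<mu> \<Longrightarrow> \<mu> \<in> W \<Longrightarrow> \<kappa> \<in> {1..d}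
   \<Longrightarrow> \<kappa> \<noteq> \<mu> \<Longrightarrow> False"
proof -
  assume a: "card f = 2" "f \<subseteq> B \<kappa>" "f \<subseteq> B \<mu>" "\<mu> \<in> W" "\<kappa> \<in> {1..d}" "\<kappa> \<noteq> \<mu>"
  hence "f \<subseteq> {1}" using W_J[of \<mu> \<kappa>] by auto
  hence "card f \<le> card {1::nat}" by (intro card_mono) auto
  thus False using a by simp
qed

lemma E'_eq: "E' = (E - (\<Union>\<mu>\<in>W. S \<mu>)) \<union> (\<Union>\<mu>\<in>W. M \<mu>)"
  unfolding switch_def by simp

lemma S_sub_B: "e \<in> S \<mu> \<Longrightarrow> e \<subseteq> B \<mu>" by blast

lemma S_other: "\<kappa> \<in> {1..d} \<Longrightarrow> \<mu> \<in> W \<Longrightarrow> \<kappa> \<noteq> \<mu> \<Longrightarrow> e \<in> S \<kappa> \<Longrightarrow> e \<notin> S \<mu>"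
proof
  assume a: "\<kappa> \<in> {1..d}" "\<mu> \<in> W" "\<kappa> \<noteq> \<mu>" "e \<in> S \<kappa>" "e \<in> S \<mu>"
  have c: "card e = 2" using S_edges[OF a(1) a(4)] by blast
  have s1: "e \<subseteq> B \<kappa>" using a(4) by (rule Union_upper)
  have s2: "e \<subseteq> B \<mu>" using a(5) by (rule Union_upper)
  show False by (rule edge_two[OF c s1 s2 a(2) a(1) a(3)])
qed

lemma M_other: "\<kappa> \<in> {1..d} \<Longrightarrow> \<mu> \<in> W \<Longrightarrow> \<kappa> \<noteq> \<mu> \<Longrightarrow> e \<in> M \<mu> \<Longrightarrow> e \<subseteq> B \<kappa> \<Longrightarrow> False"
proof -
  assume a: "\<kappa> \<in> {1..d}" "\<mu> \<in> W" "\<kappa> \<noteq> \<mu>" "e \<in> M \<mu>" "e \<subseteq> B \<kappa>"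
  have c: "card e = 2" and s2: "e \<subseteq> B \<mu>" using M_edges[OF a(2) a(4)] by blast+
  show False by (rule edge_two[OF c a(5) s2 a(2) a(1) a(3)])
qed

lemma E_other: "\<kappa> \<in> {1..d} \<Longrightarrow> \<mu> \<in> W \<Longrightarrow> \<kappa> \<noteq> \<mu> \<Longrightarrow> e \<in> E \<Longrightarrow> e \<subseteq> B \<kappa> \<Longrightarrow> e \<notin> S \<mu>"
proof
  assume a: "\<kappa> \<in> {1..d}" "\<mu> \<in> W" "\<kappa> \<noteq> \<mu>" "e \<in> E" "e \<subseteq> B \<kappa>" "e \<in> S \<mu>"
  have c: "card e = 2" using edgesE[OF a(4)] by blast
  have s2: "e \<subseteq> B \<mu>" using a(6) by (rule Union_upper)
  show False by (rule edge_two[OF c a(5) s2 a(2) a(1) a(3)])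
qed

lemma restr_E': "\<kappa> \<in> {1..d} \<Longrightarrow> restr E' (B \<kappa>) = (if \<kappa> \<in> W then M \<kappa> else restr E (B \<kappa>))"
proof -
  assume k: "\<kappa> \<in> {1..d}"
  show ?thesis
  proof (cases "\<kappa> \<in> W")
    case True
    have "restr E' (B \<kappa>) = M \<kappa>"
    proof (intro equalityI subsetI)
      fix e assume e: "e \<in> restr E' (B \<kappa>)"
      hence eB: "e \<subseteq> B \<kappa>" and eE': "e \<in> E'" unfolding restr_def by auto
      show "e \<in> M \<kappa>"
      proof (cases "e \<in> E")
        case True
        hence "e \<in> restr E (B \<kappa>)" using eB unfolding restr_def by auto
        hence "e \<in> S \<kappa>" using W_I[OF \<open>\<kappa> \<in> W\<close>] by simp
        hence "e \<notin> E - (\<Union>\<mu>\<in>W. S \<mu>)" using \<open>\<kappa> \<in> W\<close> by blast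
        then obtain \<mu> where "\<mu> \<in> W" "e \<in> M \<mu>" using eE' E'_eq by auto
        show ?thesis
        proof (cases "\<mu> = \<kappa>")
          case True thus ?thesis using \<open>e \<in> M \<mu>\<close> by simp
        next
          case False thus ?thesis using M_other[OF k \<open>\<mu> \<in> W\<close> _ \<open>e \<in> M \<mu>\<close> eB] by blast
        qed
      next
        case False
        then obtain \<mu> where "\<mu> \<in> W" "e \<in> M \<mu>" using eE' E'_eq by auto
        show ?thesis
        proof (cases "\<mu> = \<kappa>")
          case True thus ?thesis using \<open>e \<in> M \<mu>\<close> by simp
        next
          case False thus ?thesis using M_other[OF k \<open>\<mu> \<in> W\<close> _ \<open>e \<in> M \<mu>\<close> eB] by blast
        qed
      qed
    next
      fix e assume "e \<in> M \<kappa>"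
      thus "e \<in> restr E' (B \<kappa>)" using True M_edges E'_eq unfolding restr_def by blast
    qed
    thus ?thesis using True by simp
  next
    case False
    have "restr E' (B \<kappa>) = restr E (B \<kappa>)"
    proof (intro equalityI subsetI)
      fix e assume e: "e \<in> restr E' (B \<kappa>)"
      hence eB: "e \<subseteq> B \<kappa>" and eE': "e \<in> E'" unfolding restr_def by auto
      have "e \<notin> (\<Union>\<mu>\<in>W. M \<mu>)"
      proof
        assume "e \<in> (\<Union>\<mu>\<in>W. M \<mu>)"
        then obtain \<mu> where mu: "\<mu> \<in> W" "e \<in> M \<mu>" by blast
        hence "\<kappa> \<noteq> \<mu>" using False by blast
        thus False using M_other[OF k mu(1) _ mu(2) eB] by blast
      qed
      thus "e \<in> restr E (B \<kappa>)" using eE' eB E'_eq unfolding restr_def by auto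
    next
      fix e assume e: "e \<in> restr E (B \<kappa>)"
      hence eB: "e \<subseteq> B \<kappa>" and eE: "e \<in> E" unfolding restr_def by auto
      have "e \<notin> (\<Union>\<mu>\<in>W. S \<mu>)"
      proof
        assume "e \<in> (\<Union>\<mu>\<in>W. S \<mu>)"
        then obtain \<mu> where mu: "\<mu> \<in> W" "e \<in> S \<mu>" by blast
        hence "\<kappa> \<noteq> \<mu>" using False by blast
        thus False using E_other[OF k mu(1) _ eE eB] mu(2) by blast
      qed
      thus "e \<in> restr E' (B \<kappa>)" using eE eB E'_eq unfolding restr_def by auto
    qed
    thus ?thesis using False by simp
  qed
qed

lemma Sp_restr: "\<kappa> \<in> {1..d} \<Longrightarrow> Sp \<kappa> \<subseteq> restr E' (B \<kappa>)"
proof -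
  assume k: "\<kappa> \<in> {1..d}"
  show ?thesis
  proof (cases "\<kappa> \<in> W")
    case True thus ?thesis using restr_E'[OF k] unfolding Sp_def by simp
  next
    case False
    have "S \<kappa> \<subseteq> E" using S_props[OF k] by blast
    hence "S \<kappa> \<subseteq> restr E (B \<kappa>)" unfolding restr_def by blast
    thus ?thesis using False restr_E'[OF k] unfolding Sp_def by simp
  qed
qed

lemma Sp_sub: "\<kappa> \<in> {1..d} \<Longrightarrow> Sp \<kappa> \<subseteq> E'"
  using Sp_restr unfolding restr_def by blast

lemma USp: "\<kappa> \<in> {1..d} \<Longrightarrow> \<Union>(Sp \<kappa>) = B \<kappa>"
proof (cases "\<kappa> \<in> W")
  case True thus ?thesis using M_props[OF True] unfolding Sp_def by simp
next
  case False thus ?thesis unfolding Sp_def by simp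
qed

lemma E'_edges: "e \<in> E' \<Longrightarrow> card e = 2 \<and> e \<subseteq> {1..N}"
proof -
  assume "e \<in> E'"
  then consider "e \<in> E" | \<mu> where "\<mu> \<in> W" "e \<in> M \<mu>" using E'_eq by auto
  thus ?thesis
  proof cases
    case 1 thus ?thesis using edgesE by blast
  next
    case 2
    have m: "\<mu> \<in> {1..d}" using 2 W_sub by blast
    have "B \<mu> \<subseteq> {1..N}"
    proof
      fix x assume "x \<in> B \<mu>"
      then obtain f where "f \<in> S \<mu>" "x \<in> f" by blast
      thus "x \<in> {1..N}" using S_edges[OF m] by blast
    qed
    moreover have "card e = 2" "e \<subseteq> B \<mu>" using M_edges[OF 2] by blast+
    ultimately show ?thesis by blast
  qed
qed

lemma Sp_card: "\<kappa> \<in> {1..d} \<Longrightarrow> card (Sp \<kappa>) = 3 \<and> (\<forall>e\<in>Sp \<kappa>. card e = 2)"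
proof -
  assume k: "\<kappa> \<in> {1..d}"
  have "card (Sp \<kappa>) = 3"
  proof (cases "\<kappa> \<in> W")
    case True thus ?thesis using M_props[OF True] unfolding Sp_def by simp
  next
    case False thus ?thesis using S_props[OF k] unfolding Sp_def by simp
  qed
  moreover have "\<forall>e\<in>Sp \<kappa>. card e = 2" using Sp_sub[OF k] E'_edges by blast
  ultimately show ?thesis by blast
qed

lemma Sp_one: "\<kappa> \<in> {1..d} \<Longrightarrow> e1 (Sp \<kappa>) \<in> Sp \<kappa> \<and> 1 \<in> e1 (Sp \<kappa>) \<and>
     (\<forall>e\<in>Sp \<kappa>. 1 \<in> e \<longrightarrow> e = e1 (Sp \<kappa>))"
proof -
  assume k: "\<kappa> \<in> {1..d}"
  have "\<exists>e0. e0 \<in> Sp \<kappa> \<and> 1 \<in> e0 \<and> (\<forall>e\<in>Sp \<kappa>. 1 \<in> e \<longrightarrow> e = e0)"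
  proof (cases "\<kappa> \<in> W")
    case True
    have "1 \<in> \<Union>(M \<kappa>)" using one_B[OF k] M_props[OF True] by simp
    then obtain e0 where "e0 \<in> M \<kappa>" "1 \<in> e0" by blast
    moreover have "\<forall>e\<in>M \<kappa>. 1 \<in> e \<longrightarrow> e = e0"
      using pm_unique[of "B \<kappa>" "M \<kappa>" _ e0 1] M_props[OF True] \<open>e0 \<in> M \<kappa>\<close> \<open>1 \<in> e0\<close> by blast
    moreover have "Sp \<kappa> = M \<kappa>" using True unfolding Sp_def by simp
    ultimately show ?thesis by blast
  next
    case False
    have "enum E \<kappa> \<in> S \<kappa>" "1 \<in> enum E \<kappa>" "\<forall>e\<in>S \<kappa>. 1 \<in> e \<longrightarrow> e = enum E \<kappa>"
      using S_props[OF k] enum_props[OF k] by blast+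
    moreover have "Sp \<kappa> = S \<kappa>" using False unfolding Sp_def by simp
    ultimately show ?thesis by blast
  qed
  then obtain e0 where "e0 \<in> Sp \<kappa>" "1 \<in> e0" "\<forall>e\<in>Sp \<kappa>. 1 \<in> e \<longrightarrow> e = e0" by blast
  moreover hence "e1 (Sp \<kappa>) = e0" by (intro e1_eq) blast+
  ultimately show ?thesis by blast
qed

lemma e1_Sp_notW: "\<kappa> \<in> {1..d} \<Longrightarrow> \<kappa> \<notin> W \<Longrightarrow> e1 (Sp \<kappa>) = enum E \<kappa>"
  using e1_S unfolding Sp_def by simp

lemma e'_bij: "bij_betw (\<lambda>\<kappa>. e1 (Sp \<kappa>)) {1..d} {e\<in>E'. (1::nat) \<in> e}"
  unfolding bij_betw_def
proof (intro conjI inj_onI equalityI subsetI)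
  fix x y assume x: "x \<in> {1..d}" and y: "y \<in> {1..d}" and eq: "e1 (Sp x) = e1 (Sp y)"
  show "x = y"
  proof (rule ccontr)
    assume ne: "x \<noteq> y"
    let ?f = "e1 (Sp x)"
    have fx: "?f \<subseteq> B x" using Sp_one[OF x] USp[OF x] by blast
    have fy: "?f \<subseteq> B y" using Sp_one[OF y] USp[OF y] eq by blast
    have c2: "card ?f = 2" using Sp_one[OF x] Sp_card[OF x] by blast
    show False
    proof (cases "x \<in> W \<or> y \<in> W")
      case True
      thus False
      proof
        assume "x \<in> W" thus False using edge_two[OF c2 fy fx _ y] ne by blast
      next
        assume "y \<in> W" thus False using edge_two[OF c2 fx fy _ x] ne by blast
      qed
    next
      case False
      thus False using eq e1_Sp_notW x y enum_inj ne by metis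
    qed
  qed
next
  fix e assume "e \<in> (\<lambda>\<kappa>. e1 (Sp \<kappa>)) ` {1..d}"
  thus "e \<in> {e\<in>E'. 1 \<in> e}" using Sp_one Sp_sub by blast
next
  fix e assume "e \<in> {e\<in>E'. 1 \<in> e}"
  hence eE': "e \<in> E'" and one: "1 \<in> e" by auto
  then consider "e \<in> E" "e \<notin> (\<Union>\<mu>\<in>W. S \<mu>)" | \<mu> where "\<mu> \<in> W" "e \<in> M \<mu>"
    using E'_eq by auto
  thus "e \<in> (\<lambda>\<kappa>. e1 (Sp \<kappa>)) ` {1..d}"
  proof cases
    case 1
    then obtain \<kappa> where k: "\<kappa> \<in> {1..d}" "e = enum E \<kappa>" using enum_onto one by blast
    have "\<kappa> \<notin> W" using 1 k S_props by blast
    hence "e1 (Sp \<kappa>) = e" using e1_Sp_notW[OF k(1)] k(2) by simp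
    thus ?thesis using k(1) by (metis rev_image_eqI)
  next
    case 2
    hence "e \<in> Sp \<mu>" unfolding Sp_def by simp
    hence "e = e1 (Sp \<mu>)" using Sp_one[of \<mu>] 2 W_sub one by blast
    thus ?thesis using 2 W_sub by blast
  qed
qed

lemma finE': "finite E'"
proof -
  have "E' \<subseteq> Pow {1..N}" using E'_edges by auto
  moreover have "finite (Pow {1..N})" by simp
  ultimately show ?thesis by (rule finite_subset)
qed

lemma deg_E': "v \<in> {1..N} \<Longrightarrow> card {e\<in>E'. v \<in> e} = d"
proof -
  assume v: "v \<in> {1..N}"
  show ?thesis
  proof (cases "v = 1")
    case True
    thus ?thesis using bij_betw_same_card[OF e'_bij] by simp
  next
    case v1: False
    show ?thesis
    proof (cases "\<exists>\<mu>\<in>W. v \<in> B \<mu>")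
      case True
      then obtain \<mu> where mu: "\<mu> \<in> W" "v \<in> B \<mu>" by blast
      have muD: "\<mu> \<in> {1..d}" using mu W_sub by blast
      have pmS: "perfect_matching (B \<mu>) (S \<mu>)"
        using pm_of_three S_props[OF muD] S_edges[OF muD] W_I[OF mu(1)] by blast
      obtain a where a: "a \<in> S \<mu>" "v \<in> a" using mu by blast
      have "v \<in> \<Union>(M \<mu>)" using M_props[OF mu(1)] mu by simp
      then obtain b where b: "b \<in> M \<mu>" "v \<in> b" by blast
      have only: "\<And>\<kappa>. \<kappa> \<in> W \<Longrightarrow> v \<in> B \<kappa> \<Longrightarrow> \<kappa> = \<mu>"
        using W_J[OF mu(1)] mu v1 W_sub by blast
      have eq: "{e\<in>E'. v \<in> e} = insert b ({e\<in>E. v \<in> e} - {a})"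
      proof (intro equalityI subsetI)
        fix e assume "e \<in> {e\<in>E'. v \<in> e}"
        hence e: "e \<in> E'" "v \<in> e" by auto
        then consider "e \<in> E" "e \<notin> (\<Union>\<mu>\<in>W. S \<mu>)" | \<kappa> where "\<kappa> \<in> W" "e \<in> M \<kappa>"
          using E'_eq by auto
        thus "e \<in> insert b ({e\<in>E. v \<in> e} - {a})"
        proof cases
          case 1 thus ?thesis using a mu e by auto
        next
          case 2
          hence "v \<in> B \<kappa>" using M_edges e by blast
          hence "\<kappa> = \<mu>" using only 2 by blast
          hence "e = b" using pm_unique[of "B \<mu>" "M \<mu>" e b v] M_props[OF mu(1)] 2 b e by blast
          thus ?thesis by simp
        qed
      next
        fix e assume "e \<in> insert b ({e\<in>E. v \<in> e} - {a})"
        then consider "e = b" | "e \<in> E" "v \<in> e" "e \<noteq> a" by auto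
        thus "e \<in> {e\<in>E'. v \<in> e}"
        proof cases
          case 1 thus ?thesis using b mu E'_eq by auto
        next
          case 2
          have "e \<notin> (\<Union>\<mu>\<in>W. S \<mu>)"
          proof
            assume "e \<in> (\<Union>\<mu>\<in>W. S \<mu>)"
            then obtain \<kappa> where k: "\<kappa> \<in> W" "e \<in> S \<kappa>" by blast
            hence "\<kappa> = \<mu>" using only 2 by blast
            hence "e = a" using pm_unique[OF pmS, of e a v] k a 2 by blast
            thus False using 2 by simp
          qed
          thus ?thesis using 2 E'_eq by auto
        qed
      qed
      have bnot: "b \<notin> {e\<in>E. v \<in> e} - {a}" using M_notin_E[OF mu(1) b(1)] by blast
      have ain: "a \<in> {e\<in>E. v \<in> e}" using a S_props[OF muD] by blast
      have fin: "finite {e\<in>E. v \<in> e}" using finE by simp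
      have "card {e\<in>E'. v \<in> e} = Suc (card ({e\<in>E. v \<in> e} - {a}))"
        unfolding eq using bnot fin by simp
      also have "\<dots> = Suc (d - 1)" using card_Diff_singleton[OF ain] degE[OF v] by simp
      also have "\<dots> = d"
      proof -
        have "card {e\<in>E. v \<in> e} > 0" using ain fin card_gt_0_iff by blast
        thus ?thesis using degE[OF v] by simp
      qed
      finally show ?thesis .
    next
      case False
      have "{e\<in>E'. v \<in> e} = {e\<in>E. v \<in> e}"
      proof (intro equalityI subsetI)
        fix e assume e: "e \<in> {e\<in>E'. v \<in> e}"
        have "\<And>\<kappa>. \<kappa> \<in> W \<Longrightarrow> e \<notin> M \<kappa>"
        proof
          fix \<kappa> assume "\<kappa> \<in> W" "e \<in> M \<kappa>"
          hence "v \<in> B \<kappa>" using M_edges e by blast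
          thus False using False \<open>\<kappa> \<in> W\<close> by blast
        qed
        thus "e \<in> {e\<in>E. v \<in> e}" using e E'_eq by auto
      next
        fix e assume e: "e \<in> {e\<in>E. v \<in> e}"
        have "\<And>\<kappa>. \<kappa> \<in> W \<Longrightarrow> e \<notin> S \<kappa>" using e False by blast
        thus "e \<in> {e\<in>E'. v \<in> e}" using e E'_eq by auto
      qed
      thus ?thesis using degE[OF v] by simp
    qed
  qed
qed

lemma E'_RG: "E' \<in> RG N d"
  unfolding RG_def simple_regular_def using E'_edges deg_E' by auto

lemma enumE'_bij: "bij_betw (enum E') {1..d} {e\<in>E'. (1::nat) \<in> e}"
  using enum_bij E'_RG by blast

lemma rho_bij: "bij_betw rho {1..d} {1..d}"
proof -
  have "bij_betw (inv_into {1..d} (\<lambda>\<kappa>. e1 (Sp \<kappa>))) {e\<in>E'. (1::nat) \<in> e} {1..d}"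
    by (rule bij_betw_inv_into[OF e'_bij])
  hence "bij_betw (inv_into {1..d} (\<lambda>\<kappa>. e1 (Sp \<kappa>)) \<circ> enum E') {1..d} {1..d}"
    using bij_betw_trans[OF enumE'_bij] by blast
  moreover have "inv_into {1..d} (\<lambda>\<kappa>. e1 (Sp \<kappa>)) \<circ> enum E' = rho"
    by (rule ext) (simp add: rhoF_def)
  ultimately show ?thesis by simp
qed

lemma rho_in: "\<nu> \<in> {1..d} \<Longrightarrow> rho \<nu> \<in> {1..d}"
  using bij_betwE[OF rho_bij] by blast

lemma rho_e: "\<nu> \<in> {1..d} \<Longrightarrow> e1 (Sp (rho \<nu>)) = enum E' \<nu>"
proof -
  assume n: "\<nu> \<in> {1..d}"
  have "enum E' \<nu> \<in> (\<lambda>\<kappa>. e1 (Sp \<kappa>)) ` {1..d}"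
    using bij_betwE[OF enumE'_bij] n bij_betw_imp_surj_on[OF e'_bij] by blast
  hence "(\<lambda>\<kappa>. e1 (Sp \<kappa>)) (inv_into {1..d} (\<lambda>\<kappa>. e1 (Sp \<kappa>)) (enum E' \<nu>)) = enum E' \<nu>"
    by (rule f_inv_into_f)
  thus ?thesis by (simp add: rhoF_def)
qed

lemma S_pm: "\<mu> \<in> W \<Longrightarrow> perfect_matching (B \<mu>) (S \<mu>)"
proof -
  assume w: "\<mu> \<in> W"
  hence m: "\<mu> \<in> {1..d}" using W_sub by blast
  show ?thesis using pm_of_three S_props[OF m] S_edges[OF m] W_I[OF w] by blast
qed

lemma M_mt: "\<mu> \<in> W \<Longrightarrow> bij_betw (mt (M \<mu>)) {1..8} {X. perfect_matching (\<Union>(M \<mu>)) X \<and> M \<mu> \<inter> X = {}}"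
proof -
  assume w: "\<mu> \<in> W"
  have "card (M \<mu>) = 3 \<and> (\<forall>e\<in>M \<mu>. card e = 2) \<and> card (\<Union>(M \<mu>)) = 6"
    using M_props[OF w] M_edges[OF w] W_I[OF w] by simp
  thus ?thesis using mt_bij by blast
qed

lemma tp_W: "\<mu> \<in> W \<Longrightarrow> tp \<mu> \<in> {1..8} \<and> mt (M \<mu>) (tp \<mu>) = S \<mu>"
proof -
  assume w: "\<mu> \<in> W"
  have Sin: "S \<mu> \<in> {X. perfect_matching (\<Union>(M \<mu>)) X \<and> M \<mu> \<inter> X = {}}"
    using S_pm[OF w] M_props[OF w] by auto
  have e: "S \<mu> \<in> mt (M \<mu>) ` {1..8}" using Sin bij_betw_imp_surj_on[OF M_mt[OF w]] by simp
  have "tp \<mu> = inv_into {1..8} (mt (M \<mu>)) (S \<mu>)" using w tp_def by simp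
  thus ?thesis using inv_into_into[OF e] f_inv_into_f[OF e] by simp
qed

lemma tp_in: "\<mu> \<in> {1..d} \<Longrightarrow> tp \<mu> \<in> {1..8}"
  using tp_W S_props tp_def by (cases "\<mu> \<in> W") auto

lemma Sp_Ssets: "\<nu> \<in> {1..d} \<Longrightarrow> Sp (rho \<nu>) \<in> Ssets enum E' \<nu>"
proof -
  assume n: "\<nu> \<in> {1..d}"
  let ?m = "rho \<nu>"
  have m: "?m \<in> {1..d}" using rho_in[OF n] .
  have o: "e1 (Sp ?m) \<in> Sp ?m" "1 \<in> e1 (Sp ?m)" "\<forall>e\<in>Sp ?m. 1 \<in> e \<longrightarrow> e = e1 (Sp ?m)"
    using Sp_one[OF m] by blast+
  have r: "e1 (Sp ?m) = enum E' \<nu>" using rho_e[OF n] .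
  have "Sp ?m \<subseteq> E'" "card (Sp ?m) = 3" using Sp_sub[OF m] Sp_card[OF m] by blast+
  moreover have "enum E' \<nu> \<in> Sp ?m" using o(1) r by simp
  moreover have "\<forall>e\<in>Sp ?m - {enum E' \<nu>}. 1 \<notin> e" using o(3) r by blast
  ultimately show ?thesis unfolding Ssets_def by blast
qed

lemma om'_Omega: "om' \<in> Omega enum d E'"
  unfolding Omega_def
proof (rule PiE_I)
  fix \<nu> assume n: "\<nu> \<in> {1..d}"
  have "om' \<nu> = (Sp (rho \<nu>), tp (rho \<nu>))" using n by (simp add: omF_def)
  thus "om' \<nu> \<in> Ssets enum E' \<nu> \<times> {1..8}" using Sp_Ssets[OF n] tp_in[OF rho_in[OF n]] by simp
next
  fix \<nu> assume "\<nu> \<notin> {1..d}"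
  thus "om' \<nu> = undefined" unfolding omF_def by (simp only: if_False)
qed

lemma sw1': "sw1 N d enum mt E' om'"
  by (rule sw1.intro[OF sw_axioms]) (use E'_RG om'_Omega in \<open>unfold_locales\<close>)

lemma om'_at: "\<nu> \<in> {1..d} \<Longrightarrow> om' \<nu> = (Sp (rho \<nu>), tp (rho \<nu>))"
  by (simp add: omF_def)

lemma Wchar: "\<mu> \<in> {1..d} \<Longrightarrow> (Iind E' (Sp \<mu>) \<and> Jind d (\<lambda>\<nu>. fst (\<omega> \<nu>)) \<mu>) \<longleftrightarrow> \<mu> \<in> W"
proof -
  assume m: "\<mu> \<in> {1..d}"
  show ?thesis
  proof (cases "\<mu> \<in> W")
    case True
    have J: "Jind d (\<lambda>\<nu>. fst (\<omega> \<nu>)) \<mu>" using True unfolding Wset_def by blast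
    have "Sp \<mu> = M \<mu>" using True Sp_def by simp
    moreover have "card (\<Union>(M \<mu>)) = 6" using M_props[OF True] W_I[OF True] by simp
    moreover have "restr E' (\<Union>(M \<mu>)) = M \<mu>" using M_props[OF True] restr_E'[OF m] True by simp
    ultimately have "Iind E' (Sp \<mu>)" unfolding Iind_def by simp
    thus ?thesis using J True by blast
  next
    case False
    have "\<not> (Iind E' (Sp \<mu>) \<and> Jind d (\<lambda>\<nu>. fst (\<omega> \<nu>)) \<mu>)"
    proof
      assume a: "Iind E' (Sp \<mu>) \<and> Jind d (\<lambda>\<nu>. fst (\<omega> \<nu>)) \<mu>"
      have "Sp \<mu> = S \<mu>" using False Sp_def by simp
      hence "Iind E (S \<mu>)" using a restr_E'[OF m] False unfolding Iind_def by simp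
      hence "\<mu> \<in> W" using a m unfolding Wset_def by blast
      thus False using False by blast
    qed
    thus ?thesis using False by blast
  qed
qed

lemma rho_inj: "\<nu> \<in> {1..d} \<Longrightarrow> \<nu>' \<in> {1..d} \<Longrightarrow> rho \<nu> = rho \<nu>' \<Longrightarrow> \<nu> = \<nu>'"
  using inj_onD[OF bij_betw_imp_inj_on[OF rho_bij]] by blast

lemma rho_surj: "\<mu> \<in> {1..d} \<Longrightarrow> \<exists>\<nu>\<in>{1..d}. rho \<nu> = \<mu>"
proof -
  assume "\<mu> \<in> {1..d}"
  hence "\<mu> \<in> rho ` {1..d}" using bij_betw_imp_surj_on[OF rho_bij] by simp
  thus ?thesis by blast
qed

lemma Jind_om': "\<nu> \<in> {1..d} \<Longrightarrow> Jind d (\<lambda>\<nu>. fst (om' \<nu>)) \<nu> \<longleftrightarrow> Jind d (\<lambda>\<nu>. fst (\<omega> \<nu>)) (rho \<nu>)"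
proof -
  assume n: "\<nu> \<in> {1..d}"
  have U: "\<And>x. x \<in> {1..d} \<Longrightarrow> \<Union>(fst (om' x)) = B (rho x)"
    using om'_at USp rho_in by simp
  show ?thesis
  proof
    assume J: "Jind d (\<lambda>\<nu>. fst (om' \<nu>)) \<nu>"
    show "Jind d (\<lambda>\<nu>. fst (\<omega> \<nu>)) (rho \<nu>)"
      unfolding Jind_def
    proof (intro ballI impI)
      fix \<kappa> assume k: "\<kappa> \<in> {1..d}" "\<kappa> \<noteq> rho \<nu>"
      obtain \<nu>' where n': "\<nu>' \<in> {1..d}" "rho \<nu>' = \<kappa>" using rho_surj[OF k(1)] by blast
      have "\<nu>' \<noteq> \<nu>" using n' k by blast
      hence "\<Union>(fst (om' \<nu>)) \<inter> \<Union>(fst (om' \<nu>')) = {1}" using J n' unfolding Jind_def by blast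
      thus "B (rho \<nu>) \<inter> B \<kappa> = {1}" using U[OF n] U[OF n'(1)] n' by simp
    qed
  next
    assume J: "Jind d (\<lambda>\<nu>. fst (\<omega> \<nu>)) (rho \<nu>)"
    show "Jind d (\<lambda>\<nu>. fst (om' \<nu>)) \<nu>"
      unfolding Jind_def
    proof (intro ballI impI)
      fix \<nu>' assume n': "\<nu>' \<in> {1..d}" "\<nu>' \<noteq> \<nu>"
      have "rho \<nu>' \<noteq> rho \<nu>" using rho_inj n n' by blast
      hence "B (rho \<nu>) \<inter> B (rho \<nu>') = {1}" using J rho_in[OF n'(1)] unfolding Jind_def by blast
      thus "\<Union>(fst (om' \<nu>)) \<inter> \<Union>(fst (om' \<nu>')) = {1}" using U[OF n] U[OF n'(1)] by simp
    qed
  qed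
qed

lemma W2_eq: "Wset d E' om' = {\<nu>\<in>{1..d}. rho \<nu> \<in> W}"
proof -
  have "\<And>\<nu>. \<nu> \<in> {1..d} \<Longrightarrow> (Iind E' (fst (om' \<nu>)) \<and> Jind d (\<lambda>\<nu>. fst (om' \<nu>)) \<nu>) \<longleftrightarrow> rho \<nu> \<in> W"
  proof -
    fix \<nu> assume n: "\<nu> \<in> {1..d}"
    have "fst (om' \<nu>) = Sp (rho \<nu>)" using om'_at[OF n] by simp
    thus "(Iind E' (fst (om' \<nu>)) \<and> Jind d (\<lambda>\<nu>. fst (om' \<nu>)) \<nu>) \<longleftrightarrow> rho \<nu> \<in> W"
      using Jind_om'[OF n] Wchar[OF rho_in[OF n]] by simp
  qed
  thus ?thesis unfolding Wset_def by blast
qed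

lemma rho_W2: "rho ` Wset d E' om' = W"
proof
  show "rho ` Wset d E' om' \<subseteq> W" using W2_eq by blast
  show "W \<subseteq> rho ` Wset d E' om'"
  proof
    fix \<mu> assume w: "\<mu> \<in> W"
    obtain \<nu> where "\<nu> \<in> {1..d}" "rho \<nu> = \<mu>" using rho_surj w W_sub by blast
    thus "\<mu> \<in> rho ` Wset d E' om'" using W2_eq w by blast
  qed
qed

lemma Sp2: "\<nu> \<in> {1..d} \<Longrightarrow> SpF d mt E' om' \<nu> = S (rho \<nu>)"
proof -
  assume n: "\<nu> \<in> {1..d}"
  show ?thesis
  proof (cases "rho \<nu> \<in> W")
    case True
    hence "\<nu> \<in> Wset d E' om'" using W2_eq n by blast
    hence "SpF d mt E' om' \<nu> = mt (Sp (rho \<nu>)) (tp (rho \<nu>))" using om'_at[OF n] by (simp add: SpF_def)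
    also have "\<dots> = S (rho \<nu>)" using tp_W[OF True] Sp_def True by simp
    finally show ?thesis .
  next
    case False
    hence "\<nu> \<notin> Wset d E' om'" using W2_eq n by blast
    hence "SpF d mt E' om' \<nu> = Sp (rho \<nu>)" using om'_at[OF n] by (simp add: SpF_def)
    thus ?thesis using Sp_def False by simp
  qed
qed

lemma tp2: "\<nu> \<in> {1..d} \<Longrightarrow> tpF d mt E' om' \<nu> = s (rho \<nu>)"
proof -
  assume n: "\<nu> \<in> {1..d}"
  have m: "rho \<nu> \<in> {1..d}" using rho_in[OF n] .
  show ?thesis
  proof (cases "rho \<nu> \<in> W")
    case True
    hence "\<nu> \<in> Wset d E' om'" using W2_eq n by blast
    hence "tpF d mt E' om' \<nu> = inv_into {1..8} (mt (mt (Sp (rho \<nu>)) (tp (rho \<nu>)))) (Sp (rho \<nu>))"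
      using om'_at[OF n] by (simp add: tpF_def)
    also have "\<dots> = inv_into {1..8} (mt (S (rho \<nu>))) (M (rho \<nu>))"
      using tp_W[OF True] Sp_def True by simp
    also have "\<dots> = s (rho \<nu>)"
      using inv_into_f_f[OF bij_betw_imp_inj_on[OF W_mt[OF True]]] S_props[OF m] by blast
    finally show ?thesis .
  next
    case False
    hence "\<nu> \<notin> Wset d E' om'" using W2_eq n by blast
    hence "tpF d mt E' om' \<nu> = tp (rho \<nu>)" using om'_at[OF n] by (simp add: tpF_def)
    thus ?thesis using tp_def False by simp
  qed
qed

lemma E2: "switch d mt E' om' = E"
proof -
  let ?W2 = "Wset d E' om'"
  have W2sub: "?W2 \<subseteq> {1..d}" using W2_eq by blast
  have a: "(\<Union>\<nu>\<in>?W2. fst (om' \<nu>)) = (\<Union>\<mu>\<in>W. M \<mu>)"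
  proof -
    have "\<And>\<nu>. \<nu> \<in> ?W2 \<Longrightarrow> fst (om' \<nu>) = M (rho \<nu>)"
      using om'_at W2_eq Sp_def by auto
    hence "(\<Union>\<nu>\<in>?W2. fst (om' \<nu>)) = (\<Union>\<nu>\<in>?W2. M (rho \<nu>))" by simp
    also have "\<dots> = (\<Union>\<mu>\<in>rho ` ?W2. M \<mu>)" by simp
    finally show ?thesis using rho_W2 by simp
  qed
  have b: "(\<Union>\<nu>\<in>?W2. mt (fst (om' \<nu>)) (snd (om' \<nu>))) = (\<Union>\<mu>\<in>W. S \<mu>)"
  proof -
    have "\<And>\<nu>. \<nu> \<in> ?W2 \<Longrightarrow> mt (fst (om' \<nu>)) (snd (om' \<nu>)) = S (rho \<nu>)"
    proof -
      fix \<nu> assume "\<nu> \<in> ?W2"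
      thus "mt (fst (om' \<nu>)) (snd (om' \<nu>)) = S (rho \<nu>)"
        using Sp2[of \<nu>] W2sub unfolding SpF_def by auto
    qed
    hence "(\<Union>\<nu>\<in>?W2. mt (fst (om' \<nu>)) (snd (om' \<nu>))) = (\<Union>\<nu>\<in>?W2. S (rho \<nu>))" by simp
    also have "\<dots> = (\<Union>\<mu>\<in>rho ` ?W2. S \<mu>)" by simp
    finally show ?thesis using rho_W2 by simp
  qed
  have AE: "(\<Union>\<mu>\<in>W. S \<mu>) \<subseteq> E" using S_props W_sub by blast
  have BE: "(\<Union>\<mu>\<in>W. M \<mu>) \<inter> E = {}" using M_notin_E by blast
  have "switch d mt E' om' = (E' - (\<Union>\<nu>\<in>?W2. fst (om' \<nu>))) \<union> (\<Union>\<nu>\<in>?W2. mt (fst (om' \<nu>)) (snd (om' \<nu>)))"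
    by (rule switch_def[of d mt E' om'])
  also have "\<dots> = (E' - (\<Union>\<mu>\<in>W. M \<mu>)) \<union> (\<Union>\<mu>\<in>W. S \<mu>)"
    by (simp only: a b)
  also have "\<dots> = E" unfolding E'_eq using AE BE by blast
  finally show ?thesis .
qed

lemma om2: "omF d mt enum E' om' = \<omega>"
proof
  fix l
  show "omF d mt enum E' om' l = \<omega> l"
  proof (cases "l \<in> {1..d}")
    case False
    thus ?thesis using om_undef[OF False] unfolding omF_def by (simp only: if_False)
  next
    case True
    let ?g = "\<lambda>\<kappa>. e1 (SpF d mt E' om' \<kappa>)"
    let ?r = "rhoF d mt enum E' om' l"
    have r: "?r = inv_into {1..d} ?g (enum E l)" unfolding rhoF_def E2 ..
    obtain k0 where k0: "k0 \<in> {1..d}" "rho k0 = l" using rho_surj[OF True] by blast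
    have g: "\<And>\<kappa>. \<kappa> \<in> {1..d} \<Longrightarrow> ?g \<kappa> = enum E (rho \<kappa>)"
      using Sp2 e1_S rho_in by simp
    have im: "enum E l \<in> ?g ` {1..d}" using g[OF k0(1)] k0 by force
    have rin: "?r \<in> {1..d}" using inv_into_into[OF im] r by simp
    have "?g ?r = enum E l" using f_inv_into_f[OF im] r by simp
    hence "enum E (rho ?r) = enum E l" using g[OF rin] by simp
    hence rr: "rho ?r = l" using enum_inj rho_in[OF rin] True by blast
    have "omF d mt enum E' om' l = (SpF d mt E' om' ?r, tpF d mt E' om' ?r)"
      using True by (simp add: omF_def)
    also have "\<dots> = (S l, s l)" using Sp2[OF rin] tp2[OF rin] rr by simp
    finally show ?thesis by simp
  qed
qed

end

lemma aux_div: "(n::nat) > 0 \<Longrightarrow> real n / real n = 1" by simp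

lemma handshake:
  assumes fE: "finite E" and fV: "finite V" and e: "\<forall>e\<in>E. e \<subseteq> V \<and> card e = 2"
  shows "(\<Sum>v\<in>V. card {e\<in>E. v \<in> e}) = 2 * card E"
proof -
  have "(\<Sum>v\<in>V. card {e\<in>E. v \<in> e}) = (\<Sum>v\<in>V. \<Sum>e\<in>E. if v \<in> e then 1 else 0)"
  proof (rule sum.cong)
    fix v assume "v \<in> V"
    have "card {e\<in>E. v \<in> e} = (\<Sum>e\<in>{e\<in>E. v \<in> e}. 1)" by (rule card_eq_sum)
    also have "\<dots> = (\<Sum>e\<in>E. if v \<in> e then 1 else 0)" using fE by (rule sum.inter_filter)
    finally show "card {e\<in>E. v \<in> e} = (\<Sum>e\<in>E. if v \<in> e then 1 else 0)" .
  qed simp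
  also have "\<dots> = (\<Sum>e\<in>E. \<Sum>v\<in>V. if v \<in> e then 1 else 0)" by (rule sum.swap)
  also have "\<dots> = (\<Sum>e\<in>E. 2)"
  proof (rule sum.cong)
    fix e assume eE: "e \<in> E"
    have "(\<Sum>v\<in>V. if v \<in> e then 1 else 0) = (\<Sum>v\<in>{v\<in>V. v \<in> e}. 1::nat)"
      using fV by (rule sum.inter_filter[symmetric])
    also have "\<dots> = card {v\<in>V. v \<in> e}" by simp
    also have "{v\<in>V. v \<in> e} = e" using e eE by blast
    finally show "(\<Sum>v\<in>V. if v \<in> e then 1 else 0) = (2::nat)" using e eE by simp
  qed simp
  finally show ?thesis by simp
qed

context sw
begin

lemma sw1I: "E \<in> RG N d \<Longrightarrow> \<omega> \<in> Omega enum d E \<Longrightarrow> sw1 N d enum mt E \<omega>"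
proof -
  assume "E \<in> RG N d" "\<omega> \<in> Omega enum d E"
  thus ?thesis by (intro sw1.intro[OF sw_axioms] sw1_axioms.intro)
qed

lemma finRG: "finite (RG N d)"
proof -
  have "RG N d \<subseteq> Pow (Pow {1..N})" unfolding RG_def simple_regular_def by blast
  moreover have "finite (Pow (Pow {1..N}))" by simp
  ultimately show ?thesis by (rule finite_subset)
qed

lemma cardE: "E \<in> RG N d \<Longrightarrow> card E = N * d div 2"
proof -
  assume E: "E \<in> RG N d"
  have sr: "E \<subseteq> {e. e \<subseteq> {1..N} \<and> card e = 2}" "\<forall>v\<in>{1..N}. card {e\<in>E. v \<in> e} = d"
    using E unfolding RG_def simple_regular_def by blast+
  have "E \<subseteq> Pow {1..N}" using sr(1) by blast
  moreover have "finite (Pow {1..N})" by simp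
  ultimately have fE: "finite E" by (rule finite_subset)
  have "(\<Sum>v\<in>{1..N}. card {e\<in>E. v \<in> e}) = 2 * card E"
    by (rule handshake[OF fE]) (use sr(1) in auto)
  moreover have "(\<Sum>v\<in>{1..N}. card {e\<in>E. v \<in> e}) = N * d" using sr(2) by simp
  ultimately show ?thesis by simp
qed

lemma card_Ssets: "E \<in> RG N d \<Longrightarrow> \<mu> \<in> {1..d} \<Longrightarrow> card (Ssets enum E \<mu>) = (N * d div 2 - d) choose 2"
proof -
  assume E: "E \<in> RG N d" and m: "\<mu> \<in> {1..d}"
  let ?e = "enum E \<mu>"
  let ?E1 = "{e\<in>E. (1::nat) \<notin> e}"
  have eb: "bij_betw (enum E) {1..d} {e\<in>E. (1::nat) \<in> e}" using enum_bij E by blast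
  have e: "?e \<in> E" "1 \<in> ?e" using bij_betwE[OF eb] m by blast+
  have sr: "E \<subseteq> {e. e \<subseteq> {1..N} \<and> card e = 2}"
    using E unfolding RG_def simple_regular_def by blast
  have "E \<subseteq> Pow {1..N}" using sr by blast
  moreover have "finite (Pow {1..N})" by simp
  ultimately have fE: "finite E" by (rule finite_subset)
  have c1: "card {e\<in>E. (1::nat) \<in> e} = d" using bij_betw_same_card[OF eb] by simp
  have "?E1 = E - {e\<in>E. (1::nat) \<in> e}" by blast
  hence cE1: "card ?E1 = N * d div 2 - d"
    using card_Diff_subset[of "{e\<in>E. (1::nat) \<in> e}" E] fE c1 cardE[OF E] by simp
  have fE1: "finite ?E1" using fE by simp
  have eq: "Ssets enum E \<mu> = (\<lambda>P. insert ?e P) ` {P. P \<subseteq> ?E1 \<and> card P = 2}"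
  proof (intro equalityI subsetI)
    fix X assume X: "X \<in> Ssets enum E \<mu>"
    hence X1: "X \<subseteq> E" "card X = 3" "?e \<in> X" "\<forall>e\<in>X - {?e}. 1 \<notin> e" unfolding Ssets_def by blast+
    have fX: "finite X" using X1(2) card.infinite by fastforce
    have "X - {?e} \<subseteq> ?E1" using X1 by blast
    moreover have "card (X - {?e}) = 2" using X1(2,3) fX by simp
    moreover have "X = insert ?e (X - {?e})" using X1(3) by (rule insert_Diff[symmetric])
    ultimately show "X \<in> (\<lambda>P. insert ?e P) ` {P. P \<subseteq> ?E1 \<and> card P = 2}"
      by (intro rev_image_eqI[of "X - {?e}"]) simp_all
  next
    fix X assume "X \<in> (\<lambda>P. insert ?e P) ` {P. P \<subseteq> ?E1 \<and> card P = 2}"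
    then obtain P where P: "P \<subseteq> ?E1" "card P = 2" "X = insert ?e P" by blast
    have fP: "finite P" using P(2) card.infinite by fastforce
    have nP: "?e \<notin> P" using P(1) e(2) by blast
    have "X \<subseteq> E" using P e by blast
    moreover have "card X = 3" using P(2,3) nP fP by simp
    moreover have "?e \<in> X" using P by blast
    moreover have "\<forall>e\<in>X - {?e}. 1 \<notin> e" using P by blast
    ultimately show "X \<in> Ssets enum E \<mu>" unfolding Ssets_def by blast
  qed
  have inj: "inj_on (\<lambda>P. insert ?e P) {P. P \<subseteq> ?E1 \<and> card P = 2}"
  proof (rule inj_onI)
    fix P Q assume "P \<in> {P. P \<subseteq> ?E1 \<and> card P = 2}" "Q \<in> {P. P \<subseteq> ?E1 \<and> card P = 2}"
      "insert ?e P = insert ?e Q"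
    moreover have "?e \<notin> P" "?e \<notin> Q" using calculation(1,2) e(2) by blast+
    ultimately show "P = Q" using insert_ident by metis
  qed
  have "card (Ssets enum E \<mu>) = card {P. P \<subseteq> ?E1 \<and> card P = 2}"
    unfolding eq using inj by (rule card_image)
  also have "\<dots> = card ?E1 choose 2" by (rule n_subsets[OF fE1])
  finally show ?thesis using cE1 by simp
qed

lemma fin_Ssets: "E \<in> RG N d \<Longrightarrow> finite (Ssets enum E \<mu>)"
proof -
  assume E: "E \<in> RG N d"
  have "E \<subseteq> Pow {1..N}" using E unfolding RG_def simple_regular_def by blast
  moreover have "finite (Pow {1..N})" by simp
  ultimately have fE: "finite E" by (rule finite_subset)
  have "Ssets enum E \<mu> \<subseteq> Pow E" unfolding Ssets_def by blast
  moreover have "finite (Pow E)" using fE by simp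
  ultimately show ?thesis by (rule finite_subset)
qed

lemma fin_Omega: "E \<in> RG N d \<Longrightarrow> finite (Omega enum d E)"
  unfolding Omega_def using fin_Ssets by (intro finite_PiE) auto

lemma card_Omega: "E \<in> RG N d \<Longrightarrow> card (Omega enum d E) = (((N * d div 2 - d) choose 2) * 8) ^ d"
proof -
  assume E: "E \<in> RG N d"
  have "card (Omega enum d E) = (\<Prod>\<mu>\<in>{1..d}. card (Ssets enum E \<mu> \<times> {1..(8::nat)}))"
    unfolding Omega_def by (rule card_PiE) simp
  also have "\<dots> = (\<Prod>\<mu>\<in>{1..d}. ((N * d div 2 - d) choose 2) * 8)"
    by (rule prod.cong) (simp_all add: card_cartesian_product card_Ssets[OF E])
  finally show ?thesis by simp
qed

definition fib where "fib X = Sigma (RG N d) (\<lambda>E. {\<omega>\<in>Omega enum d E. switch d mt E \<omega> = X})"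

definition Phi where "Phi p = (switch d mt (fst p) (snd p), omF d mt enum (fst p) (snd p))"

lemma fib_card: "X \<in> RG N d \<Longrightarrow> card (fib X) = card (Omega enum d X)"
proof -
  assume X: "X \<in> RG N d"
  have "bij_betw Phi (fib X) ({X} \<times> Omega enum d X)"
  proof (rule bij_betw_byWitness[where f' = Phi])
    show "\<forall>a\<in>fib X. Phi (Phi a) = a"
    proof
      fix a assume "a \<in> fib X"
      then obtain E \<omega> where a: "a = (E, \<omega>)" "E \<in> RG N d" "\<omega> \<in> Omega enum d E" unfolding fib_def by auto
      interpret q: sw1 N d enum mt E \<omega> using sw1I a by blast
      show "Phi (Phi a) = a" using q.E2 q.om2 a by (simp add: Phi_def)
    qed
    show "\<forall>a\<in>{X} \<times> Omega enum d X. Phi (Phi a) = a"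
    proof
      fix a assume "a \<in> {X} \<times> Omega enum d X"
      then obtain \<omega> where a: "a = (X, \<omega>)" "\<omega> \<in> Omega enum d X" by auto
      interpret q: sw1 N d enum mt X \<omega> using sw1I a X by blast
      show "Phi (Phi a) = a" using q.E2 q.om2 a by (simp add: Phi_def)
    qed
    show "Phi ` fib X \<subseteq> {X} \<times> Omega enum d X"
    proof
      fix b assume "b \<in> Phi ` fib X"
      then obtain E \<omega> where a: "b = Phi (E, \<omega>)" "E \<in> RG N d" "\<omega> \<in> Omega enum d E" "switch d mt E \<omega> = X"
        unfolding fib_def by auto
      interpret q: sw1 N d enum mt E \<omega> using sw1I a by blast
      show "b \<in> {X} \<times> Omega enum d X" using a q.om'_Omega by (simp add: Phi_def)
    qed
    show "Phi ` ({X} \<times> Omega enum d X) \<subseteq> fib X"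
    proof
      fix b assume "b \<in> Phi ` ({X} \<times> Omega enum d X)"
      then obtain \<omega> where a: "b = Phi (X, \<omega>)" "\<omega> \<in> Omega enum d X" by auto
      interpret q: sw1 N d enum mt X \<omega> using sw1I a X by blast
      show "b \<in> fib X" using a q.om'_Omega q.E'_RG q.E2 unfolding fib_def by (simp add: Phi_def)
    qed
  qed
  hence "card (fib X) = card ({X} \<times> Omega enum d X)" by (rule bij_betw_same_card)
  thus ?thesis by (simp add: card_cartesian_product)
qed

lemma fib_empty: "X \<notin> RG N d \<Longrightarrow> fib X = {}"
proof -
  assume X: "X \<notin> RG N d"
  { fix E \<omega> assume a: "E \<in> RG N d" "\<omega> \<in> Omega enum d E" "switch d mt E \<omega> = X"
    interpret q: sw1 N d enum mt E \<omega> using sw1I a by blast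
    have False using q.E'_RG a X by simp }
  thus ?thesis unfolding fib_def by blast
qed

lemma main:
  assumes ne: "RG N d \<noteq> {}" and Sne: "\<forall>E\<in>RG N d. \<forall>\<mu>\<in>{1..d}. Ssets enum E \<mu> \<noteq> {}"
  shows "bind_pmf (pmf_of_set (RG N d)) (\<lambda>E. map_pmf (switch d mt E) (pmf_of_set (Omega enum d E)))
         = pmf_of_set (RG N d)"
proof (rule pmf_eqI)
  fix X
  let ?c = "(((N * d div 2 - d) choose 2) * 8) ^ d"
  have One: "\<And>E. E \<in> RG N d \<Longrightarrow> Omega enum d E \<noteq> {}"
    unfolding Omega_def using Sne by (auto simp: PiE_eq_empty_iff)
  obtain E0 where E0: "E0 \<in> RG N d" using ne by blast
  have cpos: "?c > 0" using card_Omega[OF E0] fin_Omega[OF E0] One[OF E0] card_gt_0_iff by metis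
  have "pmf (bind_pmf (pmf_of_set (RG N d)) (\<lambda>E. map_pmf (switch d mt E) (pmf_of_set (Omega enum d E)))) X
      = (\<Sum>E\<in>RG N d. pmf (map_pmf (switch d mt E) (pmf_of_set (Omega enum d E))) X) / real (card (RG N d))"
    by (rule pmf_bind_pmf_of_set[OF ne finRG])
  also have "(\<Sum>E\<in>RG N d. pmf (map_pmf (switch d mt E) (pmf_of_set (Omega enum d E))) X)
      = (\<Sum>E\<in>RG N d. real (card {\<omega>\<in>Omega enum d E. switch d mt E \<omega> = X}) / real ?c)"
  proof (rule sum.cong)
    fix E assume E: "E \<in> RG N d"
    have "pmf (map_pmf (switch d mt E) (pmf_of_set (Omega enum d E))) X
        = real (card (Omega enum d E \<inter> switch d mt E -` {X})) / real (card (Omega enum d E))"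
      unfolding pmf_map by (rule measure_pmf_of_set[OF One[OF E] fin_Omega[OF E]])
    moreover have "Omega enum d E \<inter> switch d mt E -` {X} = {\<omega>\<in>Omega enum d E. switch d mt E \<omega> = X}" by blast
    ultimately show "pmf (map_pmf (switch d mt E) (pmf_of_set (Omega enum d E))) X
        = real (card {\<omega>\<in>Omega enum d E. switch d mt E \<omega> = X}) / real ?c"
      using card_Omega[OF E] by simp
  qed simp
  also have "\<dots> = real (\<Sum>E\<in>RG N d. card {\<omega>\<in>Omega enum d E. switch d mt E \<omega> = X}) / real ?c"
    by (simp add: sum_divide_distrib)
  also have "(\<Sum>E\<in>RG N d. card {\<omega>\<in>Omega enum d E. switch d mt E \<omega> = X}) = card (fib X)"
    unfolding fib_def using finRG fin_Omega by (intro card_SigmaI[symmetric]) auto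
  finally have eq: "pmf (bind_pmf (pmf_of_set (RG N d)) (\<lambda>E. map_pmf (switch d mt E) (pmf_of_set (Omega enum d E)))) X
      = real (card (fib X)) / real ?c / real (card (RG N d))" .
  show "pmf (bind_pmf (pmf_of_set (RG N d)) (\<lambda>E. map_pmf (switch d mt E) (pmf_of_set (Omega enum d E)))) X
      = pmf (pmf_of_set (RG N d)) X"
  proof (cases "X \<in> RG N d")
    case True
    have cf: "card (fib X) = ?c" using fib_card[OF True] card_Omega[OF True] by simp
    have one: "real (card (fib X)) / real ?c = 1" unfolding cf by (rule aux_div[OF cpos])
    have "pmf (bind_pmf (pmf_of_set (RG N d)) (\<lambda>E. map_pmf (switch d mt E) (pmf_of_set (Omega enum d E)))) X
      = 1 / real (card (RG N d))" using eq unfolding one .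
    thus ?thesis using True by (simp add: pmf_of_set[OF ne finRG])
  next
    case False
    thus ?thesis using eq fib_empty[OF False] by (simp add: pmf_of_set[OF ne finRG])
  qed
qed

end

theorem lemma6p1:
  fixes N d :: nat
    and enum :: "nat set set \<Rightarrow> nat \<Rightarrow> nat set"
    and mt :: "nat set set \<Rightarrow> nat \<Rightarrow> nat set set"
  assumes nonempty: "RG N d \<noteq> {}"
    and enum_bij: "\<forall>E\<in>RG N d. bij_betw (enum E) {1..d} {e\<in>E. (1::nat) \<in> e}"
    and mt_bij: "\<forall>S::nat set set. card S = 3 \<and> (\<forall>e\<in>S. card e = 2) \<and> card (\<Union>S) = 6 \<longrightarrow>
                   bij_betw (mt S) {1..8} {M. perfect_matching (\<Union>S) M \<and> S \<inter> M = {}}"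
    and S_nonempty: "\<forall>E\<in>RG N d. \<forall>\<mu>\<in>{1..d}. Ssets enum E \<mu> \<noteq> {}"
  shows "bind_pmf (pmf_of_set (RG N d))
           (\<lambda>E. map_pmf (switch d mt E) (pmf_of_set (Omega enum d E)))
         = pmf_of_set (RG N d)"
proof -
  interpret sw N d enum mt using enum_bij mt_bij by unfold_locales
  show ?thesis by (rule main[OF nonempty S_nonempty])
qed

end
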